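(* (Dobinski's formula) Let $\lambda$ be a nonzero real number and $x$ a real number with $|\lambda x|<1$. Then for every integer $n\ge0$, \[ \mathrm{Bel}_{n,\lambda}(x)=e_{\lambda}^{-1}(x)\Big(x\frac{d}{dx}\Big)^{n}e_{\lambda}(x)=e_{\lambda}^{-1}(x)\sum_{k=0}^{\infty}\frac{(1)_{k,\lambda}}{k!}\,k^{n}x^{k}. \]
   Context: For nonzero real $\lambda$: $(1)_{0,\lambda}=1$, $(1)_{k,\lambda}=1(1-\lambda)\cdots(1-(k-1)\lambda)$ for $k\ge1$; $e_\lambda(x)=(1+\lambda x)^{1/\lambda}$ and $e_\lambda^{-1}(x)=(1+\lambda x)^{-1/\lambda}$. The new type degenerate Bell polynomials $\mathrm{Bel}_{n,\lambda}(x)$ are defined by the generating function $e_{\lambda}(xe^{t})\,e_{\lambda}^{-1}(x)=\sum_{n=0}^{\infty}\mathrm{Bel}_{n,\lambda}(x)\frac{t^{n}}{n!}$, i.e. $\big(\frac{1+\lambda xe^t}{1+\lambda x}\big)^{1/\lambda}$ expanded in powers of $t$. $(x\frac{d}{dx})^n$ denotes the $n$-fold iterate of the operator $f\mapsto xf'(x)$. *)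

theory Defs
  imports "HOL-Analysis.Analysis"
begin

definition deg_fall_one :: "real \<Rightarrow> nat \<Rightarrow> real" where
  "deg_fall_one l k = (\<Prod>i<k. 1 - real i * l)"

definition e_lam :: "real \<Rightarrow> real \<Rightarrow> real" where
  "e_lam l x = (1 + l * x) powr (1 / l)"

definition e_lam_inv :: "real \<Rightarrow> real \<Rightarrow> real" where
  "e_lam_inv l x = (1 + l * x) powr (- 1 / l)"

text \<open>New type degenerate Bell polynomials: n! times the n-th Taylor coefficient at t = 0
  of the generating function e_lambda(x e^t) e_lambda^{-1}(x), i.e. its n-th derivative at 0.\<close>
definition Bel_lam :: "nat \<Rightarrow> real \<Rightarrow> real \<Rightarrow> real" where
  "Bel_lam n l x = (deriv ^^ n) (\<lambda>t. e_lam l (x * exp t) * e_lam_inv l x) 0"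

definition xD :: "(real \<Rightarrow> real) \<Rightarrow> real \<Rightarrow> real" where
  "xD f = (\<lambda>x. x * deriv f x)"

end

theory Submission
  imports Defs
begin

lemma coef_eq:
  fixes l y :: real assumes "l \<noteq> 0"
  shows "((1/l) gchoose k) * (l*y)^k = deg_fall_one l k / fact k * y^k"
proof -
  have "((1/l) gchoose k) * l^k = (\<Prod>i<k. (1/l - real i) * l) / fact k"
    by (simp add: gbinomial_prod_rev prod.distrib atLeast0LessThan)
  also have "(\<Prod>i<k. (1/l - real i) * l) = deg_fall_one l k"
    unfolding deg_fall_one_def using assms by (intro prod.cong) (auto simp: field_simps)
  finally have h: "((1/l) gchoose k) * l^k = deg_fall_one l k / fact k" .
  have "((1/l) gchoose k) * (l*y)^k = (((1/l) gchoose k) * l^k) * y^k"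
    by (simp add: power_mult_distrib mult_ac)
  then show ?thesis using h by simp
qed

lemma base_sums:
  fixes l y :: real assumes "l \<noteq> 0" "\<bar>y\<bar> < 1/\<bar>l\<bar>"
  shows "(\<lambda>k. deg_fall_one l k / fact k * real k ^ 0 * y^k) sums e_lam l y"
proof -
  have "\<bar>l*y\<bar> < 1" using assms by (simp add: abs_mult field_simps)
  from gen_binomial_real[OF this, of "1/l"]
  show ?thesis unfolding e_lam_def using coef_eq[OF assms(1)] by simp
qed

definition acoef :: "real \<Rightarrow> nat \<Rightarrow> nat \<Rightarrow> real" where
  "acoef l n k = deg_fall_one l k / fact k * real k ^ n"

lemma series_facts:
  fixes l :: real assumes l: "l \<noteq> 0"
  shows "\<forall>y. \<bar>y\<bar> < 1/\<bar>l\<bar> \<longrightarrow> summable (\<lambda>k. acoef l n k * y^k)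
           \<and> (xD ^^ n) (e_lam l) y = (\<Sum>k. acoef l n k * y^k)"
proof (induction n)
  case 0
  show ?case using base_sums[OF l] by (auto simp: acoef_def sums_iff)
next
  case (Suc n)
  let ?F = "\<lambda>y. \<Sum>k. acoef l n k * y^k"
  show ?case
  proof (intro allI impI)
    fix y :: real assume y: "\<bar>y\<bar> < 1/\<bar>l\<bar>"
    have der: "(?F has_field_derivative (\<Sum>k. diffs (acoef l n) k * y^k)) (at y)"
      by (rule termdiffs_strong'[of "1/\<bar>l\<bar>"]) (use Suc y in auto)
    have sd: "summable (\<lambda>k. diffs (acoef l n) k * y^k)"
      by (rule termdiff_converges[of y "1/\<bar>l\<bar>"]) (use Suc y in auto)
    have ev: "eventually (\<lambda>z. (xD ^^ n) (e_lam l) z = ?F z) (nhds y)"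
    proof -
      have "open {z::real. \<bar>z\<bar> < 1/\<bar>l\<bar>}"
        by (intro open_Collect_less continuous_intros)
      from eventually_nhds_in_open[OF this] y
      have "eventually (\<lambda>z. z \<in> {z::real. \<bar>z\<bar> < 1/\<bar>l\<bar>}) (nhds y)" by simp
      then show ?thesis by (rule eventually_mono) (use Suc in auto)
    qed
    have "(xD ^^ Suc n) (e_lam l) y = y * deriv ((xD ^^ n) (e_lam l)) y"
      by (simp add: xD_def)
    also have "deriv ((xD ^^ n) (e_lam l)) y = deriv ?F y"
      by (rule deriv_cong_ev[OF ev refl])
    also have "deriv ?F y = (\<Sum>k. diffs (acoef l n) k * y^k)"
      using der by (rule DERIV_imp_deriv)
    finally have eq1: "(xD ^^ Suc n) (e_lam l) y = y * (\<Sum>k. diffs (acoef l n) k * y^k)" .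
    have tm: "y * (diffs (acoef l n) k * y^k) = acoef l (Suc n) (Suc k) * y^(Suc k)" for k
      by (simp add: diffs_def acoef_def field_simps)
    have s1: "(\<lambda>k. acoef l (Suc n) (Suc k) * y^(Suc k)) sums (y * (\<Sum>k. diffs (acoef l n) k * y^k))"
      using sums_mult[OF summable_sums[OF sd], of y] tm by simp
    hence s2: "(\<lambda>k. acoef l (Suc n) k * y^k) sums (y * (\<Sum>k. diffs (acoef l n) k * y^k))"
      using sums_Suc_iff[of "\<lambda>k. acoef l (Suc n) k * y^k"] by (simp add: acoef_def)
    show "summable (\<lambda>k. acoef l (Suc n) k * y^k) \<and>
          (xD ^^ Suc n) (e_lam l) y = (\<Sum>k. acoef l (Suc n) k * y^k)"
      using s2 eq1 by (auto simp: sums_iff)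
  qed
qed

lemma H_deriv:
  fixes l :: real assumes l: "l \<noteq> 0" and z: "\<bar>z\<bar> < 1/\<bar>l\<bar>"
  shows "((xD ^^ n) (e_lam l) has_field_derivative deriv ((xD ^^ n) (e_lam l)) z) (at z)"
proof -
  let ?F = "\<lambda>y. \<Sum>k. acoef l n k * y^k"
  have S: "open {z::real. \<bar>z\<bar> < 1/\<bar>l\<bar>}"
    by (intro open_Collect_less continuous_intros)
  have der: "(?F has_field_derivative (\<Sum>k. diffs (acoef l n) k * z^k)) (at z)"
    by (rule termdiffs_strong'[of "1/\<bar>l\<bar>"]) (use series_facts[OF l, of n] z in auto)
  have "((xD ^^ n) (e_lam l) has_field_derivative (\<Sum>k. diffs (acoef l n) k * z^k)) (at z)"
    by (rule has_field_derivative_transform_within_open[OF der S])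
       (use series_facts[OF l, of n] z in auto)
  then show ?thesis using DERIV_imp_deriv by metis
qed

lemma bel_deriv:
  fixes l x c :: real assumes l: "l \<noteq> 0"
  shows "\<forall>t. \<bar>x * exp t\<bar> < 1/\<bar>l\<bar> \<longrightarrow>
     (deriv ^^ n) (\<lambda>t. e_lam l (x * exp t) * c) t = (xD ^^ n) (e_lam l) (x * exp t) * c"
proof (induction n)
  case 0 then show ?case by simp
next
  case (Suc n)
  show ?case
  proof (intro allI impI)
    fix t :: real assume t: "\<bar>x * exp t\<bar> < 1/\<bar>l\<bar>"
    let ?H = "(xD ^^ n) (e_lam l)"
    have T: "open {t::real. \<bar>x * exp t\<bar> < 1/\<bar>l\<bar>}"
      by (intro open_Collect_less continuous_intros)
    have ev: "eventually (\<lambda>s. (deriv ^^ n) (\<lambda>t. e_lam l (x * exp t) * c) s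
                 = ?H (x * exp s) * c) (nhds t)"
    proof -
      from eventually_nhds_in_open[OF T] t
      have "eventually (\<lambda>s. s \<in> {t::real. \<bar>x * exp t\<bar> < 1/\<bar>l\<bar>}) (nhds t)" by simp
      then show ?thesis by (rule eventually_mono) (use Suc in auto)
    qed
    have d1: "((\<lambda>s. x * exp s) has_real_derivative x * exp t) (at t)"
      by (auto intro!: derivative_eq_intros)
    have d2: "((\<lambda>s. ?H (x * exp s) * c) has_real_derivative
               deriv ?H (x * exp t) * (x * exp t) * c) (at t)"
      using DERIV_cmult_right[OF DERIV_chain2[OF H_deriv[OF l t] d1], where c=c] by simp
    have "(deriv ^^ Suc n) (\<lambda>t. e_lam l (x * exp t) * c) t
          = deriv ((deriv ^^ n) (\<lambda>t. e_lam l (x * exp t) * c)) t" by simp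
    also have "\<dots> = deriv (\<lambda>s. ?H (x * exp s) * c) t"
      by (rule deriv_cong_ev[OF ev refl])
    also have "\<dots> = deriv ?H (x * exp t) * (x * exp t) * c"
      using d2 by (rule DERIV_imp_deriv)
    also have "\<dots> = (xD ^^ Suc n) (e_lam l) (x * exp t) * c"
      by (simp add: xD_def)
    finally show "(deriv ^^ Suc n) (\<lambda>t. e_lam l (x * exp t) * c) t
       = (xD ^^ Suc n) (e_lam l) (x * exp t) * c" .
  qed
qed

theorem theorem6:
  fixes l x :: real and n :: nat
  assumes "l \<noteq> 0" and "\<bar>l * x\<bar> < 1"
  shows "Bel_lam n l x = e_lam_inv l x * (xD ^^ n) (e_lam l) x
         \<and> summable (\<lambda>k. deg_fall_one l k / fact k * real k ^ n * x ^ k)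
         \<and> e_lam_inv l x * (xD ^^ n) (e_lam l) x
           = e_lam_inv l x * (\<Sum>k. deg_fall_one l k / fact k * real k ^ n * x ^ k)"
proof -
  have x: "\<bar>x\<bar> < 1/\<bar>l\<bar>" using assms by (simp add: abs_mult field_simps)
  have "Bel_lam n l x = (xD ^^ n) (e_lam l) (x * exp 0) * e_lam_inv l x"
    unfolding Bel_lam_def using bel_deriv[OF assms(1), where x=x and n=n and c="e_lam_inv l x"] x by simp
  moreover have "summable (\<lambda>k. acoef l n k * x^k) \<and> (xD ^^ n) (e_lam l) x = (\<Sum>k. acoef l n k * x^k)"
    using series_facts[OF assms(1), of n] x by blast
  ultimately show ?thesis by (simp add: acoef_def)
qed

end
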